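(* Let $(\mu_n)_{n\ge1}$ be a sequence of probability measures on $\mathbb{Z}$ such that (1) there exist $0<\alpha\le1$ and $C>0$ such that for all $n\ge1$, $|\mu_n(x+y)-\mu_n(x)|\le C\frac{|y|^{\alpha}}{|x|^{1+\alpha}}$ for all $x,y\in\mathbb{Z}$ with $2|y|\le|x|$; (2) $\hat{\mu}_n(t)\to0$ as $n\to\infty$ for almost every $t\in[-1/2,1/2)$. Then $\|\mu_n-\mu_n*\delta_1\|_1=\sum_{k\in\mathbb{Z}}|\mu_n(k)-\mu_n(k-1)|\to0$ as $n\to\infty$.
   Context: $\delta_1$ denotes the point mass at $1$, so $(\mu*\delta_1)(k)=\mu(k-1)$. The Fourier transform of a probability measure $\mu$ on $\mathbb{Z}$ is $\hat{\mu}(t)=\sum_{k\in\mathbb{Z}}\mu(k)e^{2\pi ikt}$, $t\in[-1/2,1/2)$. *)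

theory Defs
  imports "HOL-Probability.Probability"
begin

definition fourier_pmf :: "int pmf \<Rightarrow> real \<Rightarrow> complex" where
  "fourier_pmf \<mu> t = (\<Sum>\<^sub>\<infinity>k::int. complex_of_real (pmf \<mu> k) * cis (2 * pi * of_int k * t))"

end

theory Submission imports Defs begin

abbreviation "II \<equiv> {-1/2..1/2::real}"

lemma fin_M: "finite_measure (lebesgue_on II)"
  by (rule finite_measure_lebesgue_on) simp

lemma meas_t: "(\<lambda>t. t) \<in> borel_measurable (lebesgue_on II)"
proof -
  have "(\<lambda>t::real. t) \<in> borel_measurable lebesgue"
    by (rule measurable_completion) simp
  then show ?thesis by (rule measurable_restrict_space1)
qed

lemma meas_pair:
  "(\<lambda>(k::int, t). cis (2 * pi * of_int k * t) * cis (- (2 * pi * of_int k0 * t)))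
     \<in> borel_measurable (measure_pmf p \<Otimes>\<^sub>M lebesgue_on II)"
proof -
  have 1: "(\<lambda>x. real_of_int (fst x)) \<in> borel_measurable (measure_pmf p \<Otimes>\<^sub>M lebesgue_on II)"
    by (rule measurable_compose[OF measurable_fst]) simp
  have 2: "(\<lambda>x. snd x) \<in> borel_measurable (measure_pmf p \<Otimes>\<^sub>M lebesgue_on II)"
    by (rule measurable_compose[OF measurable_snd meas_t])
  have 3: "(\<lambda>x. (real_of_int (fst x), snd x)) \<in> borel_measurable (measure_pmf p \<Otimes>\<^sub>M lebesgue_on II)"
    using 1 2 by measurable
  have c: "continuous_on UNIV (\<lambda>(a::real, b::real). cis (2 * pi * a * b) * cis (- (2 * pi * of_int k0 * b)))"
    unfolding case_prod_beta by (intro continuous_intros)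
  show ?thesis
    using borel_measurable_continuous_on[OF c 3] by (simp add: case_prod_beta)
qed

lemma fourier_integral:
  "fourier_pmf p t = (\<integral>k. cis (2 * pi * of_int k * t) \<partial>measure_pmf p)"
proof -
  have "(\<integral>k. cis (2 * pi * of_int k * t) \<partial>measure_pmf p)
      = infsetsum (\<lambda>k. pmf p k *\<^sub>R cis (2 * pi * of_int k * t)) UNIV"
    unfolding infsetsum_def measure_pmf_eq_density by (subst integral_density) simp_all
  also have "\<dots> = infsum (\<lambda>k. pmf p k *\<^sub>R cis (2 * pi * of_int k * t)) UNIV"
    by (rule infsetsum_infsum, rule abs_summable_on_comparison_test'[OF pmf_abs_summable[of p UNIV]])
       (simp add: norm_cis)
  finally show ?thesis unfolding fourier_pmf_def by (simp add: scaleR_conv_of_real)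
qed

lemma orth:
  fixes m :: int
  shows "integral\<^sup>L (lebesgue_on {-1/2..1/2::real}) (\<lambda>t. cis (2 * pi * of_int m * t))
         = (if m = 0 then 1 else 0)"
proof -
  have int: "integrable (lebesgue_on {-1/2..1/2::real}) (\<lambda>t. cis (2 * pi * of_int m * t))"
    by (intro continuous_imp_integrable_real continuous_intros)
  have eq: "integral\<^sup>L (lebesgue_on {-1/2..1/2::real}) (\<lambda>t. cis (2 * pi * of_int m * t))
       = integral {-1/2..1/2} (\<lambda>t. cis (2 * pi * of_int m * t))"
    by (rule lebesgue_integral_eq_integral[OF int]) simp
  show ?thesis
  proof (cases "m = 0")
    case True
    then show ?thesis using eq by simp
  next
    case False
    define c where "c = complex_of_real (2 * pi * of_int m) * \<i>"
    have c0: "c \<noteq> 0" using False by (simp add: c_def)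
    define F where "F t = cis (2 * pi * of_int m * t) / c" for t
    have d: "(F has_vector_derivative cis (2 * pi * of_int m * t)) (at t within {-1/2..1/2})" for t
    proof -
      have "((\<lambda>t. cis (2 * pi * of_int m * t)) has_derivative
              (\<lambda>h. (2 * pi * of_int m * h) *\<^sub>R (\<i> * cis (2 * pi * of_int m * t)))) (at t within {-1/2..1/2})"
        by (intro has_derivative_cis derivative_eq_intros) auto
      then have "((\<lambda>t. cis (2 * pi * of_int m * t)) has_vector_derivative
              (c * cis (2 * pi * of_int m * t))) (at t within {-1/2..1/2})"
        unfolding has_vector_derivative_def c_def
        by (simp add: scaleR_conv_of_real algebra_simps)
      then have "((\<lambda>t. cis (2 * pi * of_int m * t) / c) has_vector_derivative
              (c * cis (2 * pi * of_int m * t)) / c) (at t within {-1/2..1/2})"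
        by (rule has_vector_derivative_divide)
      then show ?thesis using c0 unfolding F_def by simp
    qed
    have "((\<lambda>t. cis (2 * pi * of_int m * t)) has_integral (F (1/2) - F (-1/2))) {-1/2..1/2}"
      by (rule fundamental_theorem_of_calculus, simp, rule d)
    moreover have "F (1/2) = F (-1/2)"
    proof -
      have s: "sin (pi * of_int m) = 0" by (simp add: sin_zero_iff_int2)
      show ?thesis unfolding F_def by (simp add: cis.ctr s)
    qed
    ultimately show ?thesis using eq False by (simp add: integral_unique)
  qed
qed

lemma inversion:
  "integral\<^sup>L (lebesgue_on II) (\<lambda>t. fourier_pmf p t * cis (- (2 * pi * of_int k0 * t)))
     = complex_of_real (pmf p k0)"
proof -
  let ?P = "measure_pmf p" and ?M = "lebesgue_on II"
  let ?f = "\<lambda>(k::int) t. cis (2 * pi * of_int k * t) * cis (- (2 * pi * of_int k0 * t))"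
  interpret M: finite_measure ?M by (rule fin_M)
  interpret PM: pair_sigma_finite ?P ?M
    using fin_M by (intro pair_sigma_finite.intro) (simp_all add: finite_measure_def measure_pmf.sigma_finite_measure_axioms)
  interpret PMf: finite_measure "?P \<Otimes>\<^sub>M ?M"
    by (rule finite_measure_pair_measure) unfold_locales
  have int: "integrable (?P \<Otimes>\<^sub>M ?M) (case_prod ?f)"
    by (rule PMf.integrable_const_bound[where B=1, OF _ meas_pair]) (auto simp: norm_mult)
  have "integral\<^sup>L ?M (\<lambda>t. fourier_pmf p t * cis (- (2 * pi * of_int k0 * t)))
      = (\<integral>t. (\<integral>k. ?f k t \<partial>?P) \<partial>?M)"
    unfolding fourier_integral by (simp add: integral_mult_left_zero)
  also have "\<dots> = (\<integral>k. (\<integral>t. ?f k t \<partial>?M) \<partial>?P)"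
    by (rule PM.Fubini_integral[OF int])
  also have "\<dots> = (\<integral>k. complex_of_real (indicator {k0} k) \<partial>?P)"
  proof (rule Bochner_Integration.integral_cong[OF refl])
    fix k :: int
    have "(\<integral>t. ?f k t \<partial>?M) = (\<integral>t. cis (2 * pi * of_int (k - k0) * t) \<partial>?M)"
      by (intro Bochner_Integration.integral_cong refl) (simp add: cis_mult algebra_simps)
    also have "\<dots> = complex_of_real (indicator {k0} k)" unfolding orth by (simp add: indicator_def)
    finally show "(\<integral>t. ?f k t \<partial>?M) = complex_of_real (indicator {k0} k)" .
  qed
  also have "\<dots> = complex_of_real (pmf p k0)"
    by (simp add: measure_pmf_single)
  finally show ?thesis .
qed


lemma meas_pair2:
  "(\<lambda>(t, k::int). cis (2 * pi * of_int k * t))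
     \<in> borel_measurable (lebesgue_on II \<Otimes>\<^sub>M measure_pmf p)"
proof -
  have 1: "(\<lambda>x. real_of_int (snd x)) \<in> borel_measurable (lebesgue_on II \<Otimes>\<^sub>M measure_pmf p)"
    by (rule measurable_compose[OF measurable_snd]) simp
  have 2: "(\<lambda>x. fst x) \<in> borel_measurable (lebesgue_on II \<Otimes>\<^sub>M measure_pmf p)"
    by (rule measurable_compose[OF measurable_fst meas_t])
  have 3: "(\<lambda>x. (real_of_int (snd x), fst x)) \<in> borel_measurable (lebesgue_on II \<Otimes>\<^sub>M measure_pmf p)"
    using 1 2 by measurable
  have c: "continuous_on UNIV (\<lambda>(a::real, b::real). cis (2 * pi * a * b))"
    unfolding case_prod_beta by (intro continuous_intros)
  show ?thesis
    using borel_measurable_continuous_on[OF c 3] by (simp add: case_prod_beta)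
qed

lemma meas_fourier: "(\<lambda>t. fourier_pmf p t) \<in> borel_measurable (lebesgue_on II)"
  unfolding fourier_integral
  by (rule measure_pmf.borel_measurable_lebesgue_integral) (rule meas_pair2)

lemma norm_fourier: "norm (fourier_pmf p t) \<le> 1"
proof -
  have "norm (fourier_pmf p t) \<le> (\<integral>k. norm (cis (2 * pi * of_int k * t)) \<partial>measure_pmf p)"
    unfolding fourier_integral by (rule integral_norm_bound)
  also have "\<dots> = 1" by simp
  finally show ?thesis .
qed

lemma pmf_tendsto0:
  fixes \<mu> :: "nat \<Rightarrow> int pmf"
  assumes "AE t in lborel. t \<in> {-1/2..<1/2} \<longrightarrow> ((\<lambda>n. fourier_pmf (\<mu> n) t) \<longlonglongrightarrow> 0)"
  shows "(\<lambda>n. pmf (\<mu> n) k) \<longlonglongrightarrow> 0"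
proof -
  let ?M = "lebesgue_on II"
  interpret M: finite_measure ?M by (rule fin_M)
  define s where "s n t = fourier_pmf (\<mu> n) t * cis (- (2 * pi * of_int k * t))" for n t
  have AE1: "AE t in lborel. t \<in> II \<longrightarrow> ((\<lambda>n. fourier_pmf (\<mu> n) t) \<longlonglongrightarrow> 0)"
    using assms AE_lborel_singleton[of "1/2::real"]
    by eventually_elim (auto)
  have AE2: "AE t in ?M. (\<lambda>n. fourier_pmf (\<mu> n) t) \<longlonglongrightarrow> 0"
    using AE_completion[OF AE1] by (subst AE_restrict_space_iff) auto
  have lim: "(\<lambda>n. integral\<^sup>L ?M (s n)) \<longlonglongrightarrow> integral\<^sup>L ?M (\<lambda>t. 0)"
  proof (rule integral_dominated_convergence[where w="\<lambda>_. 1"])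
    show "(\<lambda>t. 0::complex) \<in> borel_measurable ?M" by simp
    show "s n \<in> borel_measurable ?M" for n
    proof -
      have c: "continuous_on UNIV (\<lambda>x::real. cis (- (2 * pi * of_int k * x)))"
        by (intro continuous_intros)
      show ?thesis unfolding s_def
        using borel_measurable_continuous_on[OF c meas_t] meas_fourier
        by (intro borel_measurable_times) auto
    qed
    show "integrable ?M (\<lambda>_. 1::real)" by simp
    show "AE t in ?M. (\<lambda>n. s n t) \<longlonglongrightarrow> 0"
      using AE2 by eventually_elim (auto simp: s_def intro: tendsto_mult_left_zero)
    show "AE t in ?M. norm (s n t) \<le> 1" for n
      by (auto simp: s_def norm_mult norm_fourier)
  qed
  have eqs: "integral\<^sup>L ?M (s n) = complex_of_real (pmf (\<mu> n) k)" for n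
    unfolding s_def by (rule inversion)
  have "(\<lambda>n. complex_of_real (pmf (\<mu> n) k)) \<longlonglongrightarrow> 0"
    using lim unfolding eqs by simp
  from tendsto_Re[OF this] show ?thesis by simp
qed

lemma g_summable:
  fixes C s :: real
  assumes "s > 1" "C \<ge> 0"
  shows "(\<lambda>k::int. C / real_of_int \<bar>k\<bar> powr s) summable_on UNIV"
proof -
  let ?g = "\<lambda>k::int. C / real_of_int \<bar>k\<bar> powr s"
  have "summable (\<lambda>m::nat. real m powr (- s))"
    using assms by (subst summable_real_powr_iff) simp
  then have "summable (\<lambda>m::nat. C * real m powr (- s))" by (rule summable_mult)
  then have h: "(\<lambda>m::nat. C * real m powr (- s)) summable_on UNIV"
    using assms by (subst summable_on_UNIV_nonneg_real_iff) auto
  have e1: "?g \<circ> int = (\<lambda>m::nat. C * real m powr (- s))"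
    by (auto simp: fun_eq_iff powr_minus divide_inverse)
  have e2: "?g \<circ> (\<lambda>m. - int m) = (\<lambda>m::nat. C * real m powr (- s))"
    by (auto simp: fun_eq_iff powr_minus divide_inverse)
  have s1: "?g summable_on (int ` UNIV)"
    using h unfolding e1[symmetric] by (subst summable_on_reindex) auto
  have s2: "?g summable_on ((\<lambda>m. - int m) ` UNIV)"
    using h unfolding e2[symmetric] by (subst summable_on_reindex) (auto simp: inj_on_def)
  have U: "int ` UNIV \<union> (\<lambda>m. - int m) ` UNIV = (UNIV :: int set)"
  proof -
    have "k \<in> int ` UNIV \<union> (\<lambda>m. - int m) ` UNIV" for k :: int
    proof (cases "k \<ge> 0")
      case True then show ?thesis by (metis UnI1 nonneg_int_cases rangeI)
    next
      case False then have "k = - int (nat (- k))" by simp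
      then show ?thesis by blast
    qed
    then show ?thesis by blast
  qed
  show ?thesis using summable_on_union[OF s1 s2] unfolding U .
qed

lemma g_tail:
  fixes g :: "int \<Rightarrow> real"
  assumes "g summable_on UNIV" "\<And>k. g k \<ge> 0" "e > 0"
  shows "\<exists>N::int. \<forall>N'\<ge>N. infsum g {k. \<bar>k\<bar> \<ge> N'} \<le> e"
proof -
  obtain F where F: "finite F" "dist (sum g F) (infsum g UNIV) \<le> e"
    using infsum_finite_approximation[OF assms(1) assms(3)] by blast
  define N where "N = 1 + (\<Sum>k\<in>F. \<bar>k\<bar>)"
  have bnd: "\<bar>k\<bar> < N" if "k \<in> F" for k
  proof -
    have "\<bar>k\<bar> \<le> (\<Sum>k\<in>F. \<bar>k\<bar>)" using F(1) that by (intro member_le_sum) auto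
    then show ?thesis unfolding N_def by simp
  qed
  have sD: "g summable_on (UNIV - F)" by (rule summable_on_subset[OF assms(1)]) auto
  have "infsum g UNIV = infsum g (F \<union> (UNIV - F))" by simp
  also have "\<dots> = sum g F + infsum g (UNIV - F)"
    using F(1) sD by (subst infsum_Un_disjoint) auto
  finally have D: "infsum g (UNIV - F) \<le> e" using F(2) by (simp add: dist_real_def)
  show ?thesis
  proof (intro exI allI impI)
    fix N' assume "N' \<ge> N"
    have "infsum g {k. \<bar>k\<bar> \<ge> N'} \<le> infsum g (UNIV - F)"
      using \<open>N' \<ge> N\<close> bnd assms(2)
      by (intro infsum_mono_neutral summable_on_subset[OF assms(1)] sD) (auto, fastforce)
    with D show "infsum g {k. \<bar>k\<bar> \<ge> N'} \<le> e" by simp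
  qed
qed

theorem lemma2p2p1:
  fixes \<mu> :: "nat \<Rightarrow> int pmf" and \<alpha> C :: real
  assumes "0 < \<alpha>" and "\<alpha> \<le> 1" and "C > 0"
    and "\<And>n x y. n \<ge> 1 \<Longrightarrow> 2 * \<bar>y\<bar> \<le> \<bar>x\<bar> \<Longrightarrow>
           \<bar>pmf (\<mu> n) (x + y) - pmf (\<mu> n) x\<bar>
             \<le> C * (real_of_int \<bar>y\<bar> powr \<alpha>) / (real_of_int \<bar>x\<bar> powr (1 + \<alpha>))"
    and "AE t in lborel. t \<in> {-1/2..<1/2} \<longrightarrow> ((\<lambda>n. fourier_pmf (\<mu> n) t) \<longlonglongrightarrow> 0)"
  shows "(\<lambda>n. \<Sum>\<^sub>\<infinity>k::int. \<bar>pmf (\<mu> n) k - pmf (\<mu> n) (k - 1)\<bar>) \<longlonglongrightarrow> 0"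
proof -
  define a where "a n k = \<bar>pmf (\<mu> n) k - pmf (\<mu> n) (k - 1)\<bar>" for n k
  define g where "g k = C / real_of_int \<bar>k\<bar> powr (1 + \<alpha>)" for k :: int
  have gs: "g summable_on UNIV" unfolding g_def
    using assms(1,3) by (intro g_summable) auto
  have g0: "g k \<ge> 0" for k unfolding g_def using assms(3) by simp
  have ag: "a n k \<le> g k" if "n \<ge> 1" "\<bar>k\<bar> \<ge> 2" for n k
  proof -
    have "\<bar>pmf (\<mu> n) (k + (-1)) - pmf (\<mu> n) k\<bar>
             \<le> C * (real_of_int \<bar>-1\<bar> powr \<alpha>) / (real_of_int \<bar>k\<bar> powr (1 + \<alpha>))"
      using that by (intro assms(4)) auto
    then show ?thesis unfolding a_def g_def by (simp add: abs_minus_commute)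
  qed
  have a0: "a n k \<ge> 0" for n k unfolding a_def by simp
  have alim: "(\<lambda>n. a n k) \<longlonglongrightarrow> 0" for k
    unfolding a_def using pmf_tendsto0[OF assms(5), of k] pmf_tendsto0[OF assms(5), of "k - 1"]
    using tendsto_rabs[OF tendsto_diff[OF pmf_tendsto0[OF assms(5), of k] pmf_tendsto0[OF assms(5), of "k - 1"]]]
    by simp
  show ?thesis
  proof (rule LIMSEQ_I)
    fix r :: real assume r: "r > 0"
    obtain N0 where N0: "\<And>N'. N' \<ge> N0 \<Longrightarrow> infsum g {k. \<bar>k\<bar> \<ge> N'} \<le> r / 3"
      using g_tail[OF gs g0, of "r/3"] r by auto
    define N where "N = max 2 N0"
    define F where "F = {k::int. \<bar>k\<bar> < N}"
    have Ffin: "finite F"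
    proof -
      have "F \<subseteq> {-N..N}" unfolding F_def by auto
      then show ?thesis by (rule finite_subset) simp
    qed
    have tailg: "infsum g (UNIV - F) \<le> r / 3"
    proof -
      have "UNIV - F = {k. \<bar>k\<bar> \<ge> N}" unfolding F_def by auto
      then show ?thesis using N0[of N] by (simp add: N_def)
    qed
    have "(\<lambda>n. \<Sum>k\<in>F. a n k) \<longlonglongrightarrow> (\<Sum>k\<in>F. 0)"
      by (intro tendsto_sum alim)
    then have "(\<lambda>n. \<Sum>k\<in>F. a n k) \<longlonglongrightarrow> 0" by simp
    then have "eventually (\<lambda>n. dist (\<Sum>k\<in>F. a n k) 0 < r / 3) sequentially"
      using r unfolding tendsto_iff by (meson divide_pos_pos zero_less_numeral)
    moreover have "eventually (\<lambda>n. n \<ge> 1) sequentially"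
      by (rule eventually_ge_at_top)
    ultimately have ev: "eventually (\<lambda>n. norm (infsum (a n) UNIV - 0) < r) sequentially"
    proof eventually_elim
      case (elim n)
      have agn: "a n k \<le> g k" if "k \<in> UNIV - F" for k
        using ag[OF elim(2)] that unfolding F_def N_def by auto
      have sa: "a n summable_on (UNIV - F)"
        by (rule summable_on_comparison_test[OF summable_on_subset[OF gs]]) (auto simp: agn a0)
      have "infsum (a n) UNIV = infsum (a n) (F \<union> (UNIV - F))" by simp
      also have "\<dots> = sum (a n) F + infsum (a n) (UNIV - F)"
        using Ffin sa by (subst infsum_Un_disjoint) auto
      also have "infsum (a n) (UNIV - F) \<le> infsum g (UNIV - F)"
        by (intro infsum_mono sa summable_on_subset[OF gs] agn) auto
      finally have "infsum (a n) UNIV \<le> sum (a n) F + infsum g (UNIV - F)" by simp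
      moreover have "sum (a n) F < r / 3" using elim(1) by (simp add: dist_real_def)
      moreover have "infsum (a n) UNIV \<ge> 0" by (intro infsum_nonneg a0)
      ultimately show ?case using tailg by simp
    qed
    then obtain n0 where "\<And>n. n \<ge> n0 \<Longrightarrow> norm (infsum (a n) UNIV - 0) < r"
      by (auto simp: eventually_sequentially)
    then show "\<exists>n0. \<forall>n\<ge>n0. norm ((\<Sum>\<^sub>\<infinity>k. \<bar>pmf (\<mu> n) k - pmf (\<mu> n) (k - 1)\<bar>) - 0) < r"
      unfolding a_def by blast
  qed
qed

end
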